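(* Let $x,y\in S^1\cap\mathbb{H}^2$ be distinct, with $\{x_*,y_*\}=\{-1,1\}$ labelled so that $x_*,x,y,y_*$ occur in this order on the upper unit semicircle. Suppose the line $L(x,y)$ meets the real axis, at the point $w$, and let $v=L(x,x_* )\cap L(y,y_* )$. Let $S^1(a,r_a)$ be the circle through $x,y$ orthogonal to $S^1$, with $a=i\frac{y(1+|x|^2)-x(1+|y|^2)}{2(x_2y_1-x_1y_2)}$ (where $x=x_1+ix_2$, $y=y_1+iy_2$) and $r_a=\sqrt{|a|^2-1}$. Let $z$ be the point of $S^1\cap S^1(\frac w2,\frac{|w|}{2})$ in $\mathbb{H}^2$, let $n$ be the point of $L(x,y)\cap S^1(\frac w2,\frac{|w|}{2})$ in $\mathbb{H}^2$, let $\{s,t\}=S^1(a,r_a)\cap S^1(\frac w2,\frac{|w|}{2})$, and let $u=L(a)\cap L(x,y)$. Then: (1) $z$ is the hyperbolic midpoint of the hyperbolic segment $J[x,y]$; (2) $n$ is the midpoint of the Euclidean segment $[x,y]$; (3) $v$ lies on the circle $S^1(a,r_a)$; (4) the circle $S^1(a,r_a)$ is orthogonal to the circle $S^1(\frac w2,\frac{|w|}{2})$; (5) $u$ lies on the line $L(s,t)$.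
   Context: $\mathbb{H}^2$ is the upper half plane with boundary the real axis; $S^1$ is the unit circle; $S^1(c,r)$ is the circle with centre $c$ and radius $r$. $L(p,q)$ denotes the line through $p,q$ and $L(p)$ the line through $p$ orthogonal to the real axis. The hyperbolic distance on $\mathbb{H}^2$ satisfies $\cosh\rho(x,y)=1+\frac{|x-y|^2}{2\operatorname{Im}x\operatorname{Im}y}$; $J[x,y]$ is the arc of $S^1$ between $x,y$, and its hyperbolic midpoint is the $z\in J[x,y]$ with $\rho(x,z)=\rho(z,y)$. *)

theory Defs
  imports "HOL-Analysis.Analysis"
begin

definition H2 :: "complex set" where
  "H2 = {z. Im z > 0}"

definition hdist :: "complex \<Rightarrow> complex \<Rightarrow> real" where
  "hdist p q = arcosh (1 + (cmod (p - q))\<^sup>2 / (2 * Im p * Im q))"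

definition line2 :: "complex \<Rightarrow> complex \<Rightarrow> complex set" where
  "line2 p q = {p + complex_of_real r * (q - p) | r. True}"

definition vline :: "complex \<Rightarrow> complex set" where
  "vline p = {z. Re z = Re p}"

definition J :: "complex \<Rightarrow> complex \<Rightarrow> complex set" where
  "J p q = {z. cmod z = 1 \<and> Im z > 0 \<and>
               min (Arg p) (Arg q) \<le> Arg z \<and> Arg z \<le> max (Arg p) (Arg q)}"

definition hyp_midpoint :: "complex \<Rightarrow> complex \<Rightarrow> complex \<Rightarrow> bool" where
  "hyp_midpoint p q z \<longleftrightarrow> z \<in> J p q \<and> hdist p z = hdist z q"

definition circles_orthogonal :: "complex \<Rightarrow> real \<Rightarrow> complex \<Rightarrow> real \<Rightarrow> bool" where
  "circles_orthogonal c1 r1 c2 r2 \<longleftrightarrow>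
     sphere c1 r1 \<inter> sphere c2 r2 \<noteq> {} \<and>
     (\<forall>p \<in> sphere c1 r1 \<inter> sphere c2 r2. (p - c1) \<bullet> (p - c2) = 0)"

end

theory Submission
  imports Defs
begin


lemma sphere_iff:
  fixes p c :: complex
  assumes "r \<ge> 0"
  shows "p \<in> sphere c r \<longleftrightarrow> (Re p - Re c)^2 + (Im p - Im c)^2 = r^2"
proof -
  have "p \<in> sphere c r \<longleftrightarrow> cmod (c - p) = r" by (simp add: dist_norm)
  also have "\<dots> \<longleftrightarrow> (cmod (c - p))^2 = r^2" using assms by (simp add: power2_eq_iff_nonneg)
  also have "(cmod (c - p))^2 = (Re p - Re c)^2 + (Im p - Im c)^2"
    by (simp add: cmod_power2 power2_commute)
  finally show ?thesis .
qed

lemma line2_iff: "q \<in> line2 x y \<longleftrightarrow> (\<exists>r. Re q = Re x + r*(Re y - Re x) \<and> Im q = Im x + r*(Im y - Im x))"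
proof
  assume "q \<in> line2 x y"
  then obtain r where "q = x + complex_of_real r * (y - x)" unfolding line2_def by blast
  thus "\<exists>r. Re q = Re x + r*(Re y - Re x) \<and> Im q = Im x + r*(Im y - Im x)" by auto
next
  assume "\<exists>r. Re q = Re x + r*(Re y - Re x) \<and> Im q = Im x + r*(Im y - Im x)"
  then obtain r where "Re q = Re x + r*(Re y - Re x)" "Im q = Im x + r*(Im y - Im x)" by blast
  hence "q = x + complex_of_real r * (y - x)" by (simp add: complex_eq_iff)
  thus "q \<in> line2 x y" unfolding line2_def by blast
qed

lemma lin_collinear:
  fixes s1 s2 t1 t2 u1 u2 d1 d2 :: real
  assumes d2: "d2 \<noteq> 0" and s: "s1*d1+s2*d2 = 1" and t: "t1*d1+t2*d2 = 1" and u: "u1*d1+u2*d2 = 1"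
    and st: "(s1,s2) \<noteq> (t1,t2)"
  shows "\<exists>r. u1 = s1 + r*(t1-s1) \<and> u2 = s2 + r*(t2-s2)"
proof -
  define p1 p2 q1 q2 where "p1 = u1-s1" "p2 = u2-s2" "q1 = t1-s1" "q2 = t2-s2"
  have hp: "p1*d1+p2*d2 = 0" and hq: "q1*d1+q2*d2 = 0" using s t u unfolding p1_p2_q1_q2_def by (simp_all add: algebra_simps)
  have "d2*(p1*q2 - p2*q1) = 0"
  proof -
    have "d2*(p1*q2 - p2*q1) = p1*(q1*d1+q2*d2) - q1*(p1*d1+p2*d2)" by (simp add: algebra_simps)
    thus ?thesis using hp hq by simp
  qed
  hence cr: "p1*q2 = p2*q1" using d2 by simp
  have nq: "q1^2+q2^2 \<noteq> 0" using st unfolding p1_p2_q1_q2_def by (auto simp: power2_eq_square)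
  define r where "r = (p1*q1+p2*q2)/(q1^2+q2^2)"
  have "p1 = r*q1"
  proof -
    have "p1*(q1^2+q2^2) = (p1*q1+p2*q2)*q1" using cr by (simp add: power2_eq_square algebra_simps)
    thus ?thesis unfolding r_def using nq by (simp add: field_simps)
  qed
  moreover have "p2 = r*q2"
  proof -
    have "p2*(q1^2+q2^2) = (p1*q1+p2*q2)*q2" using cr by (simp add: power2_eq_square algebra_simps)
    thus ?thesis unfolding r_def using nq by (simp add: field_simps)
  qed
  ultimately show ?thesis unfolding p1_p2_q1_q2_def by (intro exI[of _ r]) (simp add: algebra_simps)
qed

lemma Arg_arccos:
  assumes "cmod z = 1" "Im z > 0"
  shows "Arg z = arccos (Re z)"
proof -
  have "z \<noteq> 0" using assms by auto
  hence "cos (Arg z) = Re z" using cos_Arg assms by simp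
  moreover have "0 < Arg z \<and> Arg z < pi" using Arg_lt_pi[of z] assms by blast
  ultimately show ?thesis using arccos_cos[of "Arg z"] by simp
qed

lemma L_n:
  fixes x1 x2 y1 y2 W r n1 n2 :: real
  assumes hx: "x1^2+x2^2=1" and hy: "y1^2+y2^2=1" and ne: "(x1,x2) \<noteq> (y1,y2)"
    and hW: "W*(x2-y2) = x2*y1 - x1*y2"
    and n1: "n1 = x1 + r*(y1-x1)" and n2: "n2 = x2+r*(y2-x2)" and n2p: "n2 > 0"
    and e0: "n1^2+n2^2 = n1*W"
  shows "r = 1/2"
proof -
  have "(x2-y2)*(n1^2+n2^2) - n1*(W*(x2-y2)) = (x2-y2)*(n1^2+n2^2 - n1*W)" by (simp add: algebra_simps)
  hence e1: "(x2-y2)*(n1^2+n2^2) - n1*(x2*y1 - x1*y2) = 0" using hW e0 by simp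
  have id: "(x2-y2)*((x1 + r*(y1-x1))^2+(x2+r*(y2-x2))^2) - (x1 + r*(y1-x1))*(x2*y1 - x1*y2) = ((x1-y1)^2+(x2-y2)^2)*(r-1/2)*(r*(x2-y2)-x2)
     + ((-1/2)*r*x2 + (1/2)*r*y2 + (1/2)*x2)*(x1^2+x2^2-1) + ((1/2)*r*x2 + (-1/2)*r*y2 + (-1/2)*x2)*(y1^2+y2^2-1)"
    by algebra
  have k: "(x1-y1)^2+(x2-y2)^2 \<noteq> 0" using ne by (auto simp: power2_eq_square)
  have "r*(x2-y2)-x2 \<noteq> 0" using n2p n2 by (simp add: algebra_simps)
  moreover have "((x1-y1)^2+(x2-y2)^2)*(r-1/2)*(r*(x2-y2)-x2) = 0" using e1 id n1 n2 hx hy by simp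
  ultimately show ?thesis using k by auto
qed

lemma L_v:
  fixes x1 x2 y1 y2 r s v1 v2 D :: real
  assumes hx: "x1^2+x2^2=1" and hy: "y1^2+y2^2=1" and x2: "x2>0" and y2: "y2 > 0"
    and D: "D = x2*y1 - x1*y2"
    and v1: "v1 = x1 + r*(1-x1)" "v1 = y1 + s*(-1-y1)"
    and v2: "v2 = x2 + r*(0-x2)" "v2 = y2 + s*(0-y2)"
  shows "D*(v1^2+v2^2+1) - 2*(v1*(x2-y2)+v2*(y1-x1)) = 0"
proof -
  define p where "p = 1 - r"
  define E where "E = x2*(1+y1) + y2*(1-x1)"
  have "x1^2 \<le> 1" "y1^2 \<le> 1" using hx hy by (smt (verit) zero_le_power2)+
  hence "y1 \<ge> -1" "x1 \<le> 1" by (auto simp: abs_square_le_1)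
  have "y1 \<noteq> -1" using hy y2 by (auto simp: power2_eq_square)
  hence "E > 0" unfolding E_def using \<open>y1 \<ge> -1\<close> \<open>x1 \<le> 1\<close> x2 y2
    by (smt (verit) mult_nonneg_nonneg mult_pos_pos)
  have pE: "p*E = 2*y2"
  proof -
    have a: "(1-r)*x2 = (1-s)*y2" using v2 by (simp add: algebra_simps)
    have b: "2 = (1-s)*(1+y1) + (1-r)*(1-x1)" using v1 by (simp add: algebra_simps)
    have "p*E*y2 = ((1-r)*x2)*(1+y1)*y2 + (1-r)*(1-x1)*y2*y2" unfolding p_def E_def by (simp add: algebra_simps)
    also have "\<dots> = ((1-s)*(1+y1) + (1-r)*(1-x1))*y2*y2" unfolding a by (simp add: algebra_simps)
    also have "\<dots> = 2*y2*y2" using b by simp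
    finally show ?thesis using y2 by simp
  qed
  have v1': "v1 = 1 - p*(1-x1)" "v2 = p*x2" using v1 v2 unfolding p_def by (simp_all add: algebra_simps)
  have G: "D*((1 - p*(1-x1))^2+(p*x2)^2+1) - 2*((1 - p*(1-x1))*(x2-y2)+(p*x2)*(y1-x1)) =
     2*(-D*(1-x1)*p*(1-p) + p*((1-x1)*(x2-y2) - x2*(y1-x1)) + (D - x2 + y2)) + (D*p^2)*(x1^2+x2^2-1)"
    by algebra
  have H: "-(x2*y1 - x1*y2)*(1-x1)*(2*y2)*((x2*(1+y1) + y2*(1-x1)) - 2*y2) + (2*y2)*(x2*(1+y1) + y2*(1-x1))*((1-x1)*(x2-y2)-x2*(y1-x1)) + (x2*(1+y1) + y2*(1-x1))^2*((x2*y1 - x1*y2)-x2+y2)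
    = (- x1*y1^2*y2 + x1*y2 - x2 - x2*y1 + x2*y1^2 + x2*y1^3 - y1^2*y2 + y2)*(x1^2+x2^2-1)
      + (- x1*y2 - x1^2*x2 - x1^2*x2*y1 + x1^2*y2 + x1^3*y2 + x2 + x2*y1 - y2)*(y1^2+y2^2-1)"
    by algebra
  have "E^2*(-D*(1-x1)*p*(1-p) + p*((1-x1)*(x2-y2) - x2*(y1-x1)) + (D - x2 + y2))
     = -D*(1-x1)*(p*E)*(E-p*E) + (p*E)*E*((1-x1)*(x2-y2) - x2*(y1-x1)) + E^2*(D - x2 + y2)"
    by (simp add: algebra_simps power2_eq_square)
  also have "\<dots> = 0" unfolding pE using H hx hy unfolding D E_def by simp
  finally show ?thesis using G \<open>E>0\<close> hx v1' by simp
qed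




theorem proposition3p7:
  fixes x y xs ys w v a z n s t u :: complex and ra :: real
  assumes x_on: "x \<in> sphere 0 1 \<inter> H2" and y_on: "y \<in> sphere 0 1 \<inter> H2"
      and xy: "x \<noteq> y"
      and stars: "{xs, ys} = {-1, 1}"
      and order: "(Arg xs < Arg x \<and> Arg x < Arg y \<and> Arg y < Arg ys) \<or>
                  (Arg xs > Arg x \<and> Arg x > Arg y \<and> Arg y > Arg ys)"
      and w: "w \<in> \<real>" "w \<in> line2 x y"
      and v: "v \<in> line2 x xs \<inter> line2 y ys"
      and a: "a = \<i> * (y * complex_of_real (1 + (cmod x)\<^sup>2) - x * complex_of_real (1 + (cmod y)\<^sup>2))
                   / complex_of_real (2 * (Im x * Re y - Re x * Im y))"
      and ra: "ra = sqrt ((cmod a)\<^sup>2 - 1)"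
      and z: "z \<in> sphere 0 1 \<inter> sphere (w / 2) (cmod w / 2) \<inter> H2"
      and n: "n \<in> line2 x y \<inter> sphere (w / 2) (cmod w / 2) \<inter> H2"
      and st: "s \<noteq> t" "{s, t} = sphere a ra \<inter> sphere (w / 2) (cmod w / 2)"
      and u: "u \<in> vline a \<inter> line2 x y"
  shows "hyp_midpoint x y z \<and> n = (x + y) / 2 \<and> v \<in> sphere a ra \<and>
         circles_orthogonal a ra (w / 2) (cmod w / 2) \<and> u \<in> line2 s t"
proof -
  define x1 x2 y1 y2 where "x1 = Re x" and "x2 = Im x" and "y1 = Re y" and "y2 = Im y"
  define D where "D = x2*y1 - x1*y2"
  have cx: "cmod x = 1" and cy: "cmod y = 1" using x_on y_on by auto
  have hx: "x1^2+x2^2 = 1" using cx unfolding x1_def x2_def by (metis cmod_power2 one_power2)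
  have hy: "y1^2+y2^2 = 1" using cy unfolding y1_def y2_def by (metis cmod_power2 one_power2)
  have x2p: "x2 > 0" and y2p: "y2 > 0" using x_on y_on by (auto simp: H2_def x2_def y2_def)
  have ne: "(x1,x2) \<noteq> (y1,y2)" using xy by (auto simp: x1_def x2_def y1_def y2_def complex_eq_iff)
  have x1y1: "x1 \<noteq> y1"
  proof
    assume e: "x1 = y1"
    hence "x2^2 = y2^2" using hx hy by simp
    hence "x2 = y2" using x2p y2p by (simp add: power2_eq_iff_nonneg)
    thus False using ne e by simp
  qed
  have Imw: "Im w = 0" using w(1) by (simp add: complex_is_Real_iff)
  obtain rw where rw: "Re w = x1 + rw*(y1-x1)" "Im w = x2 + rw*(y2-x2)"
    using w(2) unfolding line2_iff x1_def x2_def y1_def y2_def by blast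
  define W where "W = Re w"
  have wW: "w = complex_of_real W" using Imw by (simp add: W_def complex_eq_iff)
  have cw: "cmod w = \<bar>W\<bar>" using wW by simp
  have x2y2: "x2 \<noteq> y2" using rw(2) Imw x2p by auto
  have rwe: "rw*(x2-y2) = x2" using rw(2) Imw by (simp add: algebra_simps)
  have hW: "W*(x2-y2) = D"
  proof -
    have "W*(x2-y2) = x1*(x2-y2) + (y1-x1)*(rw*(x2-y2))" unfolding W_def rw(1) by (simp add: algebra_simps)
    thus ?thesis unfolding rwe D_def by (simp add: algebra_simps)
  qed
  define c where "c = x1*y1+x2*y2"
  have c2: "2*(1-c) = (x1-y1)^2+(x2-y2)^2"
  proof -
    have "(x1-y1)^2+(x2-y2)^2 = (x1^2+x2^2) + (y1^2+y2^2) - 2*c" unfolding c_def by algebra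
    thus ?thesis using hx hy by simp
  qed
  have c1: "1 - c > 0"
  proof -
    have "(x1-y1)^2 > 0" using x1y1 by simp
    thus ?thesis using c2 by (smt (verit) zero_le_power2)
  qed
  have i1: "x2 - y2 - x1*D = x2*(1-c)"
  proof -
    have "x2 - y2 - x1*D = x2*(1-c) + y2*(x1^2+x2^2-1)" unfolding D_def c_def by algebra
    thus ?thesis using hx by simp
  qed
  have i2: "x2 - y2 - y1*D = -y2*(1-c)"
  proof -
    have "x2 - y2 - y1*D = -y2*(1-c) - x2*(y1^2+y2^2-1)" unfolding D_def c_def by algebra
    thus ?thesis using hy by simp
  qed
  have DD: "D^2 + c^2 = 1"
  proof -
    have "D^2 + c^2 - 1 = (y1^2 + y2^2)*(x1^2+x2^2-1) + (y1^2+y2^2-1)" unfolding D_def c_def by algebra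
    thus ?thesis using hx hy by simp
  qed
  have D0: "D \<noteq> 0"
  proof
    assume "D = 0"
    hence "x2*(1-c) = -y2*(1-c)" using i1 i2 by simp
    moreover have "x2*(1-c) > 0" "y2*(1-c) > 0" using c1 x2p y2p by simp_all
    ultimately show False by linarith
  qed
  have W0: "W \<noteq> 0" using hW D0 by auto
  define A1 A2 where "A1 = (x2-y2)/D" and "A2 = (y1-x1)/D"
  have ReA: "Re a = A1" and ImA: "Im a = A2"
  proof -
    have aeq: "a = \<i> * (y*2 - x*2) / complex_of_real (2*D)" using a cx cy unfolding D_def x1_def x2_def y1_def y2_def
      by simp
    have "Re a = -(Im y*2 - Im x*2)/(2*D)" unfolding aeq by simp
    thus "Re a = A1" using D0 unfolding A1_def x2_def y2_def by (simp add: field_simps)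
    have "Im a = (Re y*2 - Re x*2)/(2*D)" unfolding aeq by simp
    thus "Im a = A2" using D0 unfolding A2_def x1_def y1_def by (simp add: field_simps)
  qed
  have A1D: "A1*D = x2-y2" and A2D: "A2*D = y1-x1" using D0 by (simp_all add: A1_def A2_def)
  have A1W: "A1*W = 1" using hW D0 unfolding A1_def by (simp add: field_simps mult.commute)
  have A2ne: "A2 \<noteq> 0" using x1y1 D0 by (simp add: A2_def)
  have polar: "Re p * A1 + Im p * A2 = 1" if p_in: "p \<in> line2 x y" for p
  proof -
    obtain r where r: "Re p = x1 + r*(y1-x1)" "Im p = x2 + r*(y2-x2)"
      using p_in unfolding line2_iff x1_def x2_def y1_def y2_def by blast
    have "(Re p * A1 + Im p * A2)*D = Re p*(A1*D) + Im p*(A2*D)" by (simp add: algebra_simps)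
    also have "\<dots> = D" unfolding A1D A2D r by (simp add: D_def algebra_simps)
    finally show ?thesis using D0 by simp
  qed
  have a2: "(A1^2+A2^2-1)*D^2 = (1-c)^2"
  proof -
    have "(A1^2+A2^2-1)*D^2 = (A1*D)^2 + (A2*D)^2 - D^2" by (simp add: algebra_simps power2_eq_square)
    also have "\<dots> = 2*(1-c) - (1 - c^2)" unfolding A1D A2D c2 using DD by (simp add: power2_commute)
    also have "\<dots> = (1-c)^2" by (simp add: power2_eq_square algebra_simps)
    finally show ?thesis .
  qed
  have a2p: "A1^2+A2^2-1 > 0"
  proof -
    have "(1-c)^2 > 0" using c1 by simp
    hence "(A1^2+A2^2-1)*D^2 > 0" using a2 by simp
    thus ?thesis using D0 by (simp add: zero_less_mult_iff)
  qed
  have ca: "(cmod a)^2 = A1^2+A2^2" by (simp add: cmod_power2 ReA ImA)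
  have ra2: "ra^2 = A1^2+A2^2-1" and rapos: "ra \<ge> 0" using a2p unfolding ra ca by simp_all
  have SA: "p \<in> sphere a ra \<longleftrightarrow> (Re p)^2 + (Im p)^2 - 2*(Re p*A1 + Im p*A2) + 1 = 0" for p
  proof -
    have e: "(Re p - A1)^2+(Im p - A2)^2 = ((Re p)^2 + (Im p)^2 - 2*(Re p*A1 + Im p*A2) + 1) + (A1^2+A2^2-1)"
      by (simp add: power2_eq_square algebra_simps)
    have F: "p \<in> sphere a ra \<longleftrightarrow> (Re p - A1)^2+(Im p - A2)^2 = ra^2"
      using sphere_iff[of ra p a, OF rapos] unfolding ReA ImA .
    show ?thesis unfolding F e ra2 by (intro iffI) linarith+
  qed
  have SW: "p \<in> sphere (w/2) (cmod w/2) \<longleftrightarrow> (Re p)^2 + (Im p)^2 = Re p * W" for p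
  proof -
    have e: "(Re p - W/2)^2+(Im p - 0)^2 = ((Re p)^2 + (Im p)^2 - Re p * W) + (\<bar>W\<bar>/2)^2"
      by (simp add: power2_eq_square algebra_simps)
    have "p \<in> sphere (w/2) (cmod w/2) \<longleftrightarrow> (Re p - W/2)^2+(Im p - 0)^2 = (\<bar>W\<bar>/2)^2"
      using sphere_iff[of "cmod w/2" p "w/2"] unfolding cw by (simp add: wW)
    thus ?thesis unfolding e by (intro iffI) linarith+
  qed
  have P2: "n = (x+y)/2"
  proof -
    obtain rn where rn: "Re n = x1 + rn*(y1-x1)" "Im n = x2 + rn*(y2-x2)"
      using n[THEN IntD1, THEN IntD1] unfolding line2_iff x1_def x2_def y1_def y2_def by blast
    have "Im n > 0" using n by (simp add: H2_def)
    moreover have "(Re n)^2 + (Im n)^2 = Re n * W" using n SW by blast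
    ultimately have "rn = 1/2" using L_n[OF hx hy ne, of W "Re n" rn "Im n"] hW rn unfolding D_def by blast
    hence "Re n = x1 + 1/2*(y1-x1)" "Im n = x2 + 1/2*(y2-x2)" using rn by simp_all
    hence "Re n = (x1+y1)/2" "Im n = (x2+y2)/2" by (simp_all add: field_simps)
    thus ?thesis by (simp add: complex_eq_iff x1_def x2_def y1_def y2_def)
  qed
  define z1 z2 where "z1 = Re z" and "z2 = Im z"
  have cz: "cmod z = 1" using z by auto
  have hz: "z1^2+z2^2 = 1" using cz unfolding z1_def z2_def by (metis cmod_power2 one_power2)
  have z2p: "z2 > 0" using z by (simp add: H2_def z2_def)
  have "z1^2 + z2^2 = z1 * W" using z SW unfolding z1_def z2_def by blast
  hence "z1 * W = 1" using hz by simp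
  hence z1A: "z1 = A1" using A1W W0 by (metis mult_right_cancel)
  hence zD: "z1*D = x2 - y2" using A1D by simp
  have key: "((x1-z1)^2+(x2-z2)^2)*y2 = ((z1-y1)^2+(z2-y2)^2)*x2"
  proof -
    have "((x1-z1)^2+(x2-z2)^2)*y2 - ((z1-y1)^2+(z2-y2)^2)*x2
       = (x1^2+x2^2-1)*y2 - (y1^2+y2^2-1)*x2 + (z1^2+z2^2-1)*(y2-x2) + 2*((y2 - x2) + z1*(x2*y1-x1*y2))"
      by algebra
    thus ?thesis using hx hy hz zD unfolding D_def by simp
  qed
  have hd: "hdist x z = hdist z y"
  proof -
    have e1: "(cmod (x - z))^2 = (x1-z1)^2+(x2-z2)^2" by (simp add: cmod_power2 x1_def x2_def z1_def z2_def)
    have e2: "(cmod (z - y))^2 = (z1-y1)^2+(z2-y2)^2" by (simp add: cmod_power2 y1_def y2_def z1_def z2_def)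
    have "(cmod (x - z))^2 / (2 * Im x * Im z) = (cmod (z - y))^2 / (2 * Im z * Im y)"
      unfolding e1 e2 x2_def[symmetric] y2_def[symmetric] z2_def[symmetric]
    proof -
      let ?A = "(x1-z1)^2+(x2-z2)^2" and ?B = "(z1-y1)^2+(z2-y2)^2"
      have "?A*(2*z2*y2) = (?A*y2)*(2*z2)" by (simp add: mult_ac)
      also have "\<dots> = (?B*x2)*(2*z2)" using key by simp
      also have "\<dots> = ?B*(2*x2*z2)" by (simp add: mult_ac)
      finally have "?A*(2*z2*y2) = ?B*(2*x2*z2)" .
      moreover have "2*x2*z2 \<noteq> 0" "2*z2*y2 \<noteq> 0" using x2p y2p z2p by auto
      ultimately show "?A / (2*x2*z2) = ?B / (2*z2*y2)" by (simp add: frac_eq_eq)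
    qed
    thus ?thesis unfolding hdist_def by simp
  qed
  have btw: "(z1-x1)*(z1-y1) \<le> 0"
  proof -
    have "D^2*((z1-x1)*(z1-y1)) = (z1*D - x1*D)*(z1*D - y1*D)" by (simp add: algebra_simps power2_eq_square)
    also have "\<dots> = -(x2*y2)*(1-c)^2" unfolding zD i1 i2 by (simp add: power2_eq_square algebra_simps)
    also have "\<dots> \<le> 0" using x2p y2p by simp
    finally show ?thesis using D0 by (simp add: mult_le_0_iff)
  qed
  have Argx: "Arg x = arccos x1" using Arg_arccos[OF cx] x2p unfolding x1_def x2_def by simp
  have Argy: "Arg y = arccos y1" using Arg_arccos[OF cy] y2p unfolding y1_def y2_def by simp
  have Argz: "Arg z = arccos z1" using Arg_arccos[OF cz] z2p unfolding z1_def z2_def by simp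
  have bx: "-1 \<le> x1" "x1 \<le> 1" using abs_Re_le_cmod[of x] cx unfolding x1_def by auto
  have by': "-1 \<le> y1" "y1 \<le> 1" using abs_Re_le_cmod[of y] cy unfolding y1_def by auto
  have bz: "-1 \<le> z1" "z1 \<le> 1" using abs_Re_le_cmod[of z] cz unfolding z1_def by auto
  have "(x1 \<le> z1 \<and> z1 \<le> y1) \<or> (y1 \<le> z1 \<and> z1 \<le> x1)" using btw by (auto simp: mult_le_0_iff)
  hence "min (Arg x) (Arg y) \<le> Arg z \<and> Arg z \<le> max (Arg x) (Arg y)"
    unfolding Argx Argy Argz using arccos_le_arccos bx by' bz
    by (smt (verit, best))
  hence inJ: "z \<in> J x y" unfolding J_def using cz z2p z2_def by simp
  have P1: "hyp_midpoint x y z" unfolding hyp_midpoint_def using inJ hd by simp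
  have P3: "v \<in> sphere a ra"
  proof -
    define v1 v2 where "v1 = Re v" and "v2 = Im v"
    have eq: "D*(v1^2+v2^2+1) - 2*(v1*(x2-y2)+v2*(y1-x1)) = 0"
    proof -
      obtain r where r: "v1 = x1 + r*(Re xs - x1)" "v2 = x2 + r*(Im xs - x2)"
        using v[THEN IntD1] unfolding line2_iff x1_def x2_def v1_def v2_def by blast
      obtain s where s: "v1 = y1 + s*(Re ys - y1)" "v2 = y2 + s*(Im ys - y2)"
        using v[THEN IntD2] unfolding line2_iff y1_def y2_def v1_def v2_def by blast
      have "(xs = 1 \<and> ys = -1) \<or> (xs = -1 \<and> ys = 1)" using stars by (auto simp: doubleton_eq_iff)
      thus ?thesis
      proof
        assume "xs = 1 \<and> ys = -1"
        thus ?thesis using L_v[OF hx hy x2p y2p D_def, of v1 r s v2] r s by simp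
      next
        assume "xs = -1 \<and> ys = 1"
        hence "(y2*x1 - y1*x2)*(v1^2+v2^2+1) - 2*(v1*(y2-x2)+v2*(x1-y1)) = 0"
          using L_v[OF hy hx y2p x2p refl, of v1 s r v2] r s by simp
        thus ?thesis unfolding D_def by (simp add: algebra_simps)
      qed
    qed
    have "(v1^2+v2^2 - 2*(v1*A1+v2*A2) + 1)*D = D*(v1^2+v2^2+1) - 2*(v1*(A1*D)+v2*(A2*D))"
      by (simp add: algebra_simps)
    also have "\<dots> = 0" unfolding A1D A2D using eq .
    finally show ?thesis using SA D0 unfolding v1_def v2_def by simp
  qed
  have sin: "s \<in> sphere a ra \<inter> sphere (w / 2) (cmod w / 2)" and tin: "t \<in> sphere a ra \<inter> sphere (w / 2) (cmod w / 2)"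
    using st(2) by blast+
  have P4: "circles_orthogonal a ra (w / 2) (cmod w / 2)"
    unfolding circles_orthogonal_def
  proof (intro conjI ballI)
    show "sphere a ra \<inter> sphere (w / 2) (cmod w / 2) \<noteq> {}" using sin by blast
  next
    fix p assume "p \<in> sphere a ra \<inter> sphere (w / 2) (cmod w / 2)"
    hence e1: "(Re p)^2 + (Im p)^2 - 2*(Re p*A1 + Im p*A2) + 1 = 0" and e2: "(Re p)^2 + (Im p)^2 = Re p * W"
      using SA SW by blast+
    have "(p - a) \<bullet> (p - w/2) = (Re p - A1)*(Re p - W/2) + (Im p - A2)*(Im p)"
      by (simp add: inner_complex_def ReA ImA wW)
    also have "\<dots> = (((Re p)^2 + (Im p)^2 - 2*(Re p*A1 + Im p*A2) + 1) + ((Re p)^2 + (Im p)^2 - Re p * W) + (A1*W - 1))/2"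
      by (simp add: field_simps power2_eq_square)
    also have "\<dots> = 0" using e1 e2 A1W by simp
    finally show "(p - a) \<bullet> (p - w/2) = 0" .
  qed
  have lin: "Re p * (2*A1 - W) + Im p * (2*A2) = 1" if "p \<in> sphere a ra \<inter> sphere (w / 2) (cmod w / 2)" for p
  proof -
    have e1: "(Re p)^2 + (Im p)^2 - 2*(Re p*A1 + Im p*A2) + 1 = 0" and e2: "(Re p)^2 + (Im p)^2 = Re p * W"
      using SA SW that by blast+
    have "Re p * (2*A1 - W) + Im p * (2*A2) = 2*(Re p*A1 + Im p*A2) - Re p * W" by (simp add: algebra_simps)
    thus ?thesis using e1 e2 by linarith
  qed
  have ulin: "Re u * (2*A1 - W) + Im u * (2*A2) = 1"
  proof -
    have "Re u = A1" using u by (simp add: vline_def ReA)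
    moreover have "Re u * A1 + Im u * A2 = 1" using u[THEN IntD2] by (rule polar)
    ultimately have "Re u * (2*A1 - W) + Im u * (2*A2) = 2*(Re u * A1 + Im u * A2) - A1*W" by (simp add: algebra_simps)
    thus ?thesis using A1W \<open>Re u * A1 + Im u * A2 = 1\<close> by simp
  qed
  have "(Re s, Im s) \<noteq> (Re t, Im t)" using st(1) by (auto simp: complex_eq_iff)
  then obtain r where "Re u = Re s + r*(Re t - Re s)" "Im u = Im s + r*(Im t - Im s)"
    using lin_collinear[of "2*A2" "Re s" "2*A1 - W" "Im s" "Re t" "Im t" "Re u" "Im u"] A2ne lin[OF sin] lin[OF tin] ulin
    by auto
  hence P5: "u \<in> line2 s t" unfolding line2_iff by blast
  show ?thesis using P1 P2 P3 P4 P5 by blast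
qed

end
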